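(* Let $\mathcal M$ be a space of $\mathcal Y$-valued functions contained isometrically in the Arveson space $\mathcal H_{\mathcal Y}(k_d)$ (i.e. $\mathcal M\subseteq\mathcal H_{\mathcal Y}(k_d)$ is a Hilbert space in the norm of $\mathcal H_{\mathcal Y}(k_d)$), and let $T_1,\dots,T_d\in\mathcal L(\mathcal M)$ satisfy, for every $f\in\mathcal M$, $$f(\boldsymbol\lambda)-f(0)=\sum_{j=1}^d\lambda_j(T_jf)(\boldsymbol\lambda)\ \ (\boldsymbol\lambda\in\mathbb B^d)\quad\text{and}\quad\sum_{j=1}^d\|T_jf\|^2\le\|f\|^2-\|f(0)\|^2_{\mathcal Y}.$$ Then $\mathcal M$ is invariant under $M^*_{\lambda_1},\dots,M^*_{\lambda_d}$ and $T_j=M^*_{\lambda_j}|_{\mathcal M}$ for $j=1,\dots,d$.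
   Context: $\mathbb B^d$: open unit ball of $\mathbb C^d$. For $\mathbf n\in\mathbb Z^d_+$: $|\mathbf n|=\sum n_k$, $\mathbf n!=\prod n_k!$, $\boldsymbol\lambda^{\mathbf n}=\prod\lambda_k^{n_k}$. The Arveson space $\mathcal H_{\mathcal Y}(k_d)$ is the Hilbert space of functions $f(\boldsymbol\lambda)=\sum_{\mathbf n}f_{\mathbf n}\boldsymbol\lambda^{\mathbf n}$ on $\mathbb B^d$, $f_{\mathbf n}\in\mathcal Y$, with $\|f\|^2=\sum_{\mathbf n}\frac{\mathbf n!}{|\mathbf n|!}\|f_{\mathbf n}\|^2<\infty$ (reproducing kernel $(1-\langle\boldsymbol\lambda,\boldsymbol\zeta\rangle)^{-1}$). $M_{\lambda_j}$ is multiplication by $\lambda_j$ on $\mathcal H_{\mathcal Y}(k_d)$ and $M^*_{\lambda_j}$ its adjoint. *)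

theory Defs
  imports "HOL-Analysis.Analysis"
begin

text \<open>The complex Hilbert space Y is
modelled as a real Hilbert space 'y (class real_inner + complete_space) together with a complex
structure J (multiplication by the imaginary unit): J is real-linear, J (J x) = -x and J is
orthogonal.  Complex scalar multiplication is  c . y = Re c y + Im c (J y),  and the complex
inner product of Y is recovered from the real one (which is its real part).
The dimension d is a finite index type 'd; points of C^d are complex^'d (Euclidean norm),
multi-indices are nat^'d.\<close>

definition complex_structure :: "('y::real_inner \<Rightarrow> 'y) \<Rightarrow> bool" where
  "complex_structure J \<longleftrightarrow> linear J \<and> (\<forall>x. J (J x) = - x) \<and> (\<forall>x y. inner (J x) (J y) = inner x y)"

definition scaleJ :: "('y::real_inner \<Rightarrow> 'y) \<Rightarrow> complex \<Rightarrow> 'y \<Rightarrow> 'y" where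
  "scaleJ J c y = Re c *\<^sub>R y + Im c *\<^sub>R J y"

text \<open>Complex inner product of Y (linear in the first, conjugate-linear in the second argument).\<close>
definition cinner_y :: "('y::real_inner \<Rightarrow> 'y) \<Rightarrow> 'y \<Rightarrow> 'y \<Rightarrow> complex" where
  "cinner_y J x y = Complex (inner x y) (inner x (J y))"

definition unit_ball_d :: "(complex^'d::finite) set" where
  "unit_ball_d = ball 0 1"

definition mono_pow :: "complex^'d::finite \<Rightarrow> nat^'d \<Rightarrow> complex" where
  "mono_pow z n = (\<Prod>i\<in>UNIV. (z $ i) ^ (n $ i))"

definition abs_mi :: "nat^'d::finite \<Rightarrow> nat" where
  "abs_mi n = (\<Sum>i\<in>UNIV. n $ i)"

definition arv_weight :: "nat^'d::finite \<Rightarrow> real" where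
  "arv_weight n = (\<Prod>i\<in>UNIV. fact (n $ i)) / fact (abs_mi n)"

definition arv_series :: "('y::real_inner \<Rightarrow> 'y) \<Rightarrow> (nat^'d::finite \<Rightarrow> 'y) \<Rightarrow>
    (complex^'d \<Rightarrow> 'y) \<Rightarrow> bool" where
  "arv_series J c f \<longleftrightarrow> (\<forall>z\<in>unit_ball_d. ((\<lambda>n. scaleJ J (mono_pow z n) (c n)) has_sum f z) UNIV)"

text \<open>Functions live on the ball; we normalise them to be 0 outside the ball.\<close>
definition arveson_space :: "('y::real_inner \<Rightarrow> 'y) \<Rightarrow> (complex^'d::finite \<Rightarrow> 'y) set" where
  "arveson_space J = {f. (\<forall>z. z \<notin> unit_ball_d \<longrightarrow> f z = 0) \<and>
       (\<exists>c. arv_series J c f \<and> (\<lambda>n. arv_weight n * (norm (c n))\<^sup>2) summable_on UNIV)}"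

definition arv_coef :: "('y::real_inner \<Rightarrow> 'y) \<Rightarrow> (complex^'d::finite \<Rightarrow> 'y) \<Rightarrow> nat^'d \<Rightarrow> 'y" where
  "arv_coef J f = (THE c. arv_series J c f)"

definition arv_norm :: "('y::real_inner \<Rightarrow> 'y) \<Rightarrow> (complex^'d::finite \<Rightarrow> 'y) \<Rightarrow> real" where
  "arv_norm J f = sqrt (\<Sum>\<^sub>\<infinity>n. arv_weight n * (norm (arv_coef J f n))\<^sup>2)"

definition arv_inner :: "('y::real_inner \<Rightarrow> 'y) \<Rightarrow> (complex^'d::finite \<Rightarrow> 'y) \<Rightarrow>
    (complex^'d \<Rightarrow> 'y) \<Rightarrow> complex" where
  "arv_inner J f g = (\<Sum>\<^sub>\<infinity>n. of_real (arv_weight n) * cinner_y J (arv_coef J f n) (arv_coef J g n))"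

definition mult_coord :: "('y::real_inner \<Rightarrow> 'y) \<Rightarrow> 'd::finite \<Rightarrow> (complex^'d \<Rightarrow> 'y) \<Rightarrow>
    (complex^'d \<Rightarrow> 'y)" where
  "mult_coord J j f = (\<lambda>z. scaleJ J (z $ j) (f z))"

definition mult_coord_adj :: "('y::real_inner \<Rightarrow> 'y) \<Rightarrow> 'd::finite \<Rightarrow> (complex^'d \<Rightarrow> 'y) \<Rightarrow>
    (complex^'d \<Rightarrow> 'y)" where
  "mult_coord_adj J j f = (THE h. h \<in> arveson_space J \<and>
       (\<forall>g\<in>arveson_space J. arv_inner J (mult_coord J j g) f = arv_inner J g h))"

definition isometric_hilbert_subspace :: "('y::real_inner \<Rightarrow> 'y) \<Rightarrow> (complex^'d::finite \<Rightarrow> 'y) set \<Rightarrow> bool" where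
  "isometric_hilbert_subspace J M \<longleftrightarrow> M \<subseteq> arveson_space J \<and> (\<lambda>z. 0) \<in> M \<and>
     (\<forall>f\<in>M. \<forall>g\<in>M. (\<lambda>z. f z + g z) \<in> M) \<and> (\<forall>c. \<forall>f\<in>M. (\<lambda>z. scaleJ J c (f z)) \<in> M) \<and>
     (\<forall>s. (\<forall>n. s n \<in> M) \<longrightarrow> (\<forall>e>0. \<exists>N. \<forall>m\<ge>N. \<forall>n\<ge>N. arv_norm J (\<lambda>z. s m z - s n z) < e) \<longrightarrow>
          (\<exists>f\<in>M. (\<lambda>n. arv_norm J (\<lambda>z. s n z - f z)) \<longlonglongrightarrow> 0))"

definition bounded_op_on :: "('y::real_inner \<Rightarrow> 'y) \<Rightarrow> (complex^'d::finite \<Rightarrow> 'y) set \<Rightarrow>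
    ((complex^'d \<Rightarrow> 'y) \<Rightarrow> (complex^'d \<Rightarrow> 'y)) \<Rightarrow> bool" where
  "bounded_op_on J M T \<longleftrightarrow> (\<forall>f\<in>M. T f \<in> M) \<and>
     (\<forall>f\<in>M. \<forall>g\<in>M. T (\<lambda>z. f z + g z) = (\<lambda>z. T f z + T g z)) \<and>
     (\<forall>c. \<forall>f\<in>M. T (\<lambda>z. scaleJ J c (f z)) = (\<lambda>z. scaleJ J c (T f z))) \<and>
     (\<exists>K. \<forall>f\<in>M. arv_norm J (T f) \<le> K * arv_norm J f)"

end

theory Submission
  imports Defs "HOL-Complex_Analysis.Complex_Analysis"
begin


context
  fixes J :: "'y::real_inner \<Rightarrow> 'y"
  assumes cs: "complex_structure J"
begin

lemma J_linear: "linear J" using cs by (simp add: complex_structure_def)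
lemma J_J[simp]: "J (J x) = - x" using cs by (simp add: complex_structure_def)
lemma J_inner_J[simp]: "inner (J x) (J y) = inner x y" using cs by (simp add: complex_structure_def)
lemma J_add: "J (x + y) = J x + J y" using J_linear by (simp add: linear_add)
lemma J_scaleR: "J (r *\<^sub>R x) = r *\<^sub>R J x" using J_linear by (simp add: linear_scale)
lemma J_0[simp]: "J 0 = 0" using J_linear by (simp add: linear_0)
lemma J_minus: "J (- x) = - J x" using J_linear by (simp add: linear_neg)
lemma J_diff: "J (x - y) = J x - J y" using J_linear by (simp add: linear_diff)
lemma J_sum: "J (sum f A) = (\<Sum>a\<in>A. J (f a))" using J_linear by (simp add: linear_sum)
lemma J_inner_left: "inner (J x) y = - inner x (J y)"
proof -
  have "inner (J x) y = inner (J x) (J (- J y))" by (simp add: J_minus)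
  also have "\<dots> = - inner x (J y)" by simp
  finally show ?thesis .
qed
lemma J_norm[simp]: "norm (J x) = norm x"
  by (simp add: norm_eq_sqrt_inner)
lemma bl_J: "bounded_linear J"
  by (rule bounded_linear_intro[where K=1]) (auto simp: J_add J_scaleR)

lemma scaleJ_add_right: "scaleJ J c (x + y) = scaleJ J c x + scaleJ J c y"
  by (simp add: scaleJ_def J_add algebra_simps)
lemma scaleJ_0_right[simp]: "scaleJ J c 0 = 0"
  by (simp add: scaleJ_def)
lemma scaleJ_0_left[simp]: "scaleJ J 0 x = 0"
  by (simp add: scaleJ_def)
lemma scaleJ_1[simp]: "scaleJ J 1 x = x"
  by (simp add: scaleJ_def)
lemma scaleJ_diff_right: "scaleJ J c (x - y) = scaleJ J c x - scaleJ J c y"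
  by (simp add: scaleJ_def J_diff algebra_simps)
lemma scaleJ_scaleR_right: "scaleJ J c (r *\<^sub>R x) = r *\<^sub>R scaleJ J c x"
  by (simp add: scaleJ_def J_scaleR algebra_simps)
lemma scaleJ_mult: "scaleJ J (c * d) x = scaleJ J c (scaleJ J d x)"
  by (simp add: scaleJ_def J_add J_scaleR algebra_simps)
lemma scaleJ_of_real: "scaleJ J (of_real r) x = r *\<^sub>R x"
  by (simp add: scaleJ_def)
lemma bl_scaleJ: "bounded_linear (scaleJ J c)"
proof -
  have "bounded_linear (\<lambda>x. Re c *\<^sub>R x + Im c *\<^sub>R J x)"
    by (intro bounded_linear_add bounded_linear_scaleR_right bounded_linear_ident bl_J
        bounded_linear_compose[OF bounded_linear_scaleR_right bl_J])
  then show ?thesis by (simp add: scaleJ_def[abs_def])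
qed
lemma scaleJ_sum_right: "scaleJ J c (sum f A) = (\<Sum>a\<in>A. scaleJ J c (f a))"
  using bl_scaleJ[of c] by (simp add: bounded_linear.linear linear_sum)

lemma cinner_scaleJ: "cinner_y J (scaleJ J p c) v = p * cinner_y J c v"
  by (simp add: cinner_y_def scaleJ_def inner_add_left J_inner_left complex_eq_iff algebra_simps)

lemma cinner_scaleR_right: "cinner_y J x (r *\<^sub>R y) = of_real r * cinner_y J x y"
  by (simp add: cinner_y_def J_scaleR complex_eq_iff)

lemma Re_cinner: "Re (cinner_y J x y) = inner x y"
  by (simp add: cinner_y_def)

lemma bl_cinner: "bounded_linear (\<lambda>x. cinner_y J x v)"
proof -
  have "bounded_linear (\<lambda>x. of_real (inner x v) + \<i> * of_real (inner x (J v)) :: complex)"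
    by (intro bounded_linear_add bounded_linear_compose[OF bounded_linear_mult_right]
        bounded_linear_compose[OF bounded_linear_of_real] bounded_linear_inner_left)
  moreover have "(\<lambda>x. of_real (inner x v) + \<i> * of_real (inner x (J v)) :: complex) = (\<lambda>x. cinner_y J x v)"
    by (auto simp: cinner_y_def complex_eq_iff)
  ultimately show ?thesis by simp
qed

end



lemma powser_unique0:
  fixes a :: "nat \<Rightarrow> complex"
  assumes r: "r > 0" and sm: "\<And>x. norm x < r \<Longrightarrow> (\<lambda>n. a n * x ^ n) sums 0"
  shows "a m = 0"
proof (cases "m = 0")
  case True
  have "(\<lambda>n. a n * 0 ^ n) sums a 0" by (rule powser_sums_zero)
  moreover have "(\<lambda>n. a n * 0 ^ n) sums 0" using sm[of 0] r by simp
  ultimately show ?thesis using True sums_unique2 by blast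
next
  case False
  show ?thesis
  proof (rule ccontr)
    assume "a m \<noteq> 0"
    show False
    proof (rule powser_0_nonzero[where r=r and a=a and \<xi>=0 and f="\<lambda>_. 0" and m=m])
      show "0 < r" by (rule r)
      show "\<And>x. norm (x - 0) < r \<Longrightarrow> (\<lambda>n. a n * (x - 0) ^ n) sums 0" using sm by simp
      show "a m \<noteq> 0" "0 < m" using \<open>a m \<noteq> 0\<close> False by auto
    next
      fix s :: real assume s: "0 < s" "\<And>z::complex. z \<in> cball 0 s - {0} \<Longrightarrow> (\<lambda>_. 0::complex) z \<noteq> 0"
      have "complex_of_real s \<in> cball 0 s - {0}" using s(1) by auto
      from s(2)[OF this] show False by simp
    qed simp
  qed
qed

definition S_k :: "nat \<Rightarrow> (nat^'d::finite) set" where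
  "S_k k = {n. abs_mi n = k}"

lemma finite_bounded_mi: "finite {n::nat^'d::finite. \<forall>i. n$i \<le> k}"
proof -
  have "{n::nat^'d. \<forall>i. n$i \<le> k} \<subseteq> vec_lambda ` (PiE UNIV (\<lambda>_. {..k}))"
  proof
    fix n :: "nat^'d" assume "n \<in> {n. \<forall>i. n$i \<le> k}"
    then have "(\<lambda>i. n$i) \<in> PiE UNIV (\<lambda>_. {..k})" by auto
    moreover have "n = vec_lambda (\<lambda>i. n$i)" by simp
    ultimately show "n \<in> vec_lambda ` (PiE UNIV (\<lambda>_. {..k}))" by blast
  qed
  moreover have "finite (vec_lambda ` (PiE UNIV (\<lambda>_. {..k::nat})) :: (nat^'d) set)"
    by (intro finite_imageI finite_PiE) auto
  ultimately show ?thesis by (rule finite_subset)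
qed

lemma le_abs_mi: "n $ i \<le> abs_mi n"
  unfolding abs_mi_def by (rule member_le_sum) auto

lemma finite_S_k: "finite (S_k k :: (nat^'d::finite) set)"
proof -
  have "S_k k \<subseteq> {n::nat^'d. \<forall>i. n$i \<le> k}"
    using le_abs_mi by (auto simp: S_k_def)
  then show ?thesis using finite_bounded_mi finite_subset by blast
qed

lemma mono_pow_scale: "mono_pow (\<chi> i. t * w$i) n = t ^ abs_mi n * mono_pow w n"
  by (simp add: mono_pow_def abs_mi_def power_mult_distrib prod.distrib power_sum)

lemma norm_vec_scale: "norm ((\<chi> i. t * w$i) :: complex^'d::finite) = cmod t * norm w"
proof -
  have "norm ((\<chi> i. t * w$i) :: complex^'d) = sqrt (\<Sum>i\<in>UNIV. (cmod t)^2 * (norm (w$i))^2)"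
    by (simp add: norm_vec_def L2_set_def norm_mult power_mult_distrib)
  also have "\<dots> = cmod t * norm w"
    by (simp add: norm_vec_def L2_set_def real_sqrt_mult sum_distrib_left[symmetric])
  finally show ?thesis .
qed

lemma homog_zero:
  fixes \<alpha> :: "nat^'d::finite \<Rightarrow> complex"
  assumes h: "\<forall>z\<in>unit_ball_d. ((\<lambda>n. mono_pow z n * \<alpha> n) has_sum 0) UNIV"
    and w: "norm w < 1"
  shows "(\<Sum>n\<in>S_k k. mono_pow w n * \<alpha> n) = 0"
proof -
  define P where "P k = (\<Sum>n\<in>S_k k. mono_pow w n * \<alpha> n)" for k
  have "(\<lambda>k. P k * t ^ k) sums 0" if t: "norm t < 1" for t
  proof -
    define z where "z = (\<chi> i. t * w$i)"
    have "norm z < 1" unfolding z_def norm_vec_scale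
      using t w by (metis mult_le_one mult_strict_mono' norm_ge_zero less_eq_real_def mult_1_right mult_less_cancel_left1 le_less_trans)
    then have hz: "((\<lambda>n. mono_pow z n * \<alpha> n) has_sum 0) UNIV"
      using h by (auto simp: unit_ball_d_def)
    define g where "g n = mono_pow z n * \<alpha> n" for n
    define hh where "hh n = (abs_mi n, n)" for n :: "nat^'d"
    have inj: "inj_on hh UNIV" by (auto simp: hh_def inj_on_def)
    have img: "hh ` UNIV = Sigma UNIV S_k" by (auto simp: hh_def S_k_def image_def)
    have "((\<lambda>p. g (snd p)) has_sum 0) (hh ` UNIV)"
      using hz inj by (subst has_sum_reindex) (auto simp: g_def o_def hh_def)
    then have "((\<lambda>p. g (snd p)) has_sum 0) (Sigma UNIV S_k)" using img by simp
    then have "((\<lambda>k. \<Sum>n\<in>S_k k. g n) has_sum 0) UNIV"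
      by (rule has_sum_Sigma') (auto intro: has_sum_finiteI finite_S_k)
    moreover have "(\<Sum>n\<in>S_k k. g n) = P k * t ^ k" for k
      by (simp add: g_def z_def mono_pow_scale P_def sum_distrib_left S_k_def mult_ac)
    ultimately show ?thesis by (auto dest: has_sum_imp_sums)
  qed
  then have "P k = 0" by (intro powser_unique0[of 1]) auto
  then show ?thesis by (simp add: P_def)
qed



lemma digits_bound:
  fixes f :: "nat \<Rightarrow> nat"
  assumes "\<forall>j<L. f j < B"
  shows "(\<Sum>j<L. f j * B^j) < B^L"
  using assms
proof (induction L)
  case 0 then show ?case by simp
next
  case (Suc L)
  then have a: "(\<Sum>j<L. f j * B^j) < B^L" and b: "f L < B" by auto
  from b have c: "f L * B^L \<le> (B - 1) * B^L" by auto
  have "(B - 1) * B^L + B^L = B^Suc L" using b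
    by (cases B) (auto simp: algebra_simps)
  have "(\<Sum>j<Suc L. f j * B^j) = (\<Sum>j<L. f j * B^j) + f L * B^L" by simp
  also have "\<dots> < B^L + (B - 1) * B^L" using a c by linarith
  also have "\<dots> = B^Suc L" using \<open>(B - 1) * B^L + B^L = B^Suc L\<close> by simp
  finally show ?case .
qed

lemma digits_unique:
  fixes f g :: "nat \<Rightarrow> nat"
  assumes "\<forall>j<L. f j < B" "\<forall>j<L. g j < B"
    and "(\<Sum>j<L. f j * B^j) = (\<Sum>j<L. g j * B^j)" and "j < L"
  shows "f j = g j"
  using assms
proof (induction L arbitrary: j)
  case 0 then show ?case by simp
next
  case (Suc L)
  have af: "(\<Sum>j<L. f j * B^j) < B^L" using Suc.prems by (intro digits_bound) auto
  have ag: "(\<Sum>j<L. g j * B^j) < B^L" using Suc.prems by (intro digits_bound) auto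
  have Bpos: "B^L > 0" using Suc.prems by (cases B) auto
  have eq: "(\<Sum>j<L. f j * B^j) + f L * B^L = (\<Sum>j<L. g j * B^j) + g L * B^L"
    using Suc.prems(3) by simp
  have "((\<Sum>j<L. f j * B^j) + f L * B^L) div B^L = f L"
    using af Bpos by simp
  moreover have "((\<Sum>j<L. g j * B^j) + g L * B^L) div B^L = g L"
    using ag Bpos by simp
  ultimately have fL: "f L = g L" using eq by simp
  with eq have "(\<Sum>j<L. f j * B^j) = (\<Sum>j<L. g j * B^j)" by simp
  show ?case
  proof (cases "j = L")
    case True then show ?thesis using fL by simp
  next
    case False
    then show ?thesis using Suc.IH[of j] Suc.prems \<open>(\<Sum>j<L. f j * B^j) = _\<close> by auto
  qed
qed

lemma poly_zero_multi:
  fixes \<alpha> :: "nat^'d::finite \<Rightarrow> complex"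
  assumes h: "\<And>w. norm w < 1 \<Longrightarrow> (\<Sum>n\<in>S_k k. mono_pow w n * \<alpha> n) = 0"
    and n0: "n0 \<in> S_k k"
  shows "\<alpha> n0 = 0"
proof -
  obtain \<sigma> :: "'d \<Rightarrow> nat" and L where \<sigma>: "\<sigma> ` UNIV = {i. i < L}" "inj \<sigma>"
    using finite_imp_inj_to_nat_seg[of "UNIV :: 'd set"] by auto
  define B where "B = Suc k"
  define S where "S = (S_k k :: (nat^'d) set)"
  have finS: "finite S" unfolding S_def by (rule finite_S_k)
  define e where "e n = (\<Sum>i\<in>UNIV. n$i * B^(\<sigma> i))" for n :: "nat^'d"
  define F where "F n j = n $ (inv \<sigma> j)" for n :: "nat^'d" and j
  have Fs: "F n (\<sigma> i) = n $ i" for n i using \<sigma>(2) by (simp add: F_def)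
  have e_alt: "e n = (\<Sum>j<L. F n j * B^j)" for n
  proof -
    have "(\<Sum>j<L. F n j * B^j) = (\<Sum>j\<in>\<sigma> ` UNIV. F n j * B^j)"
      using \<sigma>(1) by (simp add: lessThan_def)
    also have "\<dots> = (\<Sum>i\<in>UNIV. F n (\<sigma> i) * B^(\<sigma> i))"
      using \<sigma>(2) by (simp add: sum.reindex)
    finally show ?thesis by (simp add: e_def Fs)
  qed
  have Fb: "\<forall>j<L. F n j < B" if "n \<in> S" for n
  proof (intro allI impI)
    fix j assume "j < L"
    have "F n j \<le> abs_mi n" unfolding F_def by (rule le_abs_mi)
    then show "F n j < B" using that by (simp add: S_def S_k_def B_def)
  qed
  have inj: "inj_on e S"
  proof (rule inj_onI)
    fix n n' assume nn: "n \<in> S" "n' \<in> S" "e n = e n'"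
    have "F n j = F n' j" if "j < L" for j
      using digits_unique[of L "F n" B "F n'" j] Fb[OF nn(1)] Fb[OF nn(2)] nn(3) that
      by (simp add: e_alt)
    then have "n $ i = n' $ i" for i
      using \<sigma>(1) by (metis Fs mem_Collect_eq rangeI)
    then show "n = n'" by (simp add: vec_eq_iff)
  qed
  define r0 :: real where "r0 = 1 / (real CARD('d) + 1)"
  have r0: "r0 > 0" "r0 \<le> 1" by (auto simp: r0_def field_simps)
  define \<beta> where "\<beta> m = (if m \<in> e ` S then \<alpha> (inv_into S e m) else 0)" for m
  have "(\<lambda>m. \<beta> m * s ^ m) sums 0" if s: "norm s < r0" for s :: complex
  proof -
    define w where "w = (\<chi> i. s ^ (B ^ \<sigma> i))"
    have "norm w \<le> (\<Sum>i\<in>UNIV. norm (w $ i))" by (simp add: norm_vec_def L2_set_le_sum)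
    also have "\<dots> \<le> (\<Sum>i\<in>(UNIV::'d set). norm s)"
    proof (rule sum_mono)
      fix i
      have "norm s ^ (B ^ \<sigma> i) \<le> norm s ^ 1"
        using s r0 by (intro power_decreasing) (auto simp: B_def)
      then show "norm (w $ i) \<le> norm s" by (simp add: w_def norm_power)
    qed
    also have "\<dots> = real CARD('d) * norm s" by simp
    also have "\<dots> < 1"
    proof -
      have "real CARD('d) * norm s \<le> real CARD('d) * r0" using s by (intro mult_left_mono) auto
      also have "\<dots> < 1" by (simp add: r0_def field_simps)
      finally show ?thesis .
    qed
    finally have "norm w < 1" .
    then have z: "(\<Sum>n\<in>S. mono_pow w n * \<alpha> n) = 0" using h by (simp add: S_def)
    have mp: "mono_pow w n = s ^ e n" for n
      by (simp add: mono_pow_def w_def e_def power_sum power_mult[symmetric] mult.commute)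
    have "(\<Sum>m\<in>e ` S. \<beta> m * s ^ m) = (\<Sum>n\<in>S. \<beta> (e n) * s ^ e n)"
      using inj by (simp add: sum.reindex)
    also have "\<dots> = (\<Sum>n\<in>S. mono_pow w n * \<alpha> n)"
      using inj by (intro sum.cong) (auto simp: \<beta>_def mp)
    finally have "(\<Sum>m\<in>e ` S. \<beta> m * s ^ m) = 0" using z by simp
    moreover have "(\<lambda>m. \<beta> m * s ^ m) sums (\<Sum>m\<in>e ` S. \<beta> m * s ^ m)"
      by (rule sums_finite) (auto simp: \<beta>_def finS)
    ultimately show ?thesis by simp
  qed
  then have "\<beta> (e n0) = 0" using r0 by (intro powser_unique0[of r0]) auto
  then show ?thesis using n0 inj by (simp add: \<beta>_def S_def)
qed

lemma scalar_unique:
  fixes \<alpha> :: "nat^'d::finite \<Rightarrow> complex"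
  assumes "\<forall>z\<in>unit_ball_d. ((\<lambda>n. mono_pow z n * \<alpha> n) has_sum 0) UNIV"
  shows "\<alpha> n = 0"
proof (rule poly_zero_multi[where k="abs_mi n"])
  fix w :: "complex^'d" assume "norm w < 1"
  then show "(\<Sum>n\<in>S_k (abs_mi n). mono_pow w n * \<alpha> n) = 0" by (rule homog_zero[OF assms])
qed (simp add: S_k_def)



definition ej :: "'d::finite \<Rightarrow> nat^'d" where
  "ej j = (\<chi> i. if i = j then 1 else 0)"

definition shiftc :: "'d::finite \<Rightarrow> (nat^'d \<Rightarrow> 'y::real_vector) \<Rightarrow> nat^'d \<Rightarrow> 'y" where
  "shiftc j c n = (if 0 < n $ j then c (n - ej j) else 0)"

lemma ej_comp[simp]: "ej j $ i = (if i = j then 1 else 0)"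
  by (simp add: ej_def)

lemma add_ej_comp: "(m + ej j) $ i = m $ i + (if i = j then 1 else 0)"
  by simp

lemma add_ej_minus[simp]: "m + ej j - ej j = m"
  by (simp add: vec_eq_iff)

lemma minus_ej_add: "0 < n $ j \<Longrightarrow> n - ej j + ej j = n"
  by (simp add: vec_eq_iff)

lemma add_ej_pos[simp]: "0 < (m + ej j) $ j"
  by simp

lemma inj_add_ej: "inj (\<lambda>m. m + ej j)"
  by (rule injI) (metis add_ej_minus)

lemma image_add_ej: "range (\<lambda>m. m + ej j) = {n. 0 < n $ j}"
proof safe
  fix n :: "nat^'a" assume "0 < n $ j"
  then show "n \<in> range (\<lambda>m. m + ej j)" using minus_ej_add by (metis rangeI)
qed simp

lemma mono_pow_shift: "mono_pow z (m + ej j) = z $ j * mono_pow z m"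
proof -
  have "mono_pow z (m + ej j) = (\<Prod>i\<in>UNIV. (z $ i) ^ (m $ i) * (if i = j then z $ i else 1))"
    unfolding mono_pow_def by (intro prod.cong) (auto simp: power_add)
  also have "\<dots> = mono_pow z m * z $ j"
    by (simp add: prod.distrib mono_pow_def prod.delta)
  finally show ?thesis by simp
qed

lemma abs_mi_shift: "abs_mi (m + ej j) = abs_mi m + 1"
  by (simp add: abs_mi_def sum.distrib sum.delta)

lemma abs_mi_0[simp]: "abs_mi 0 = 0"
  by (simp add: abs_mi_def)

lemma arv_weight_pos: "arv_weight n > 0"
  by (simp add: arv_weight_def prod_pos)

lemma arv_weight_0[simp]: "arv_weight 0 = 1"
  by (simp add: arv_weight_def)

lemma arv_weight_shift:
  "arv_weight (m + ej j) * real (abs_mi m + 1) = arv_weight m * real (m $ j + 1)"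
proof -
  have "(\<Prod>i\<in>UNIV. fact ((m + ej j) $ i) :: real) = (\<Prod>i\<in>UNIV. (if i = j then real (m $ i + 1) else 1) * fact (m $ i))"
    by (intro prod.cong) (auto simp: add_ej_comp)
  also have "\<dots> = real (m $ j + 1) * (\<Prod>i\<in>UNIV. fact (m $ i))"
    by (simp add: prod.distrib prod.delta)
  finally have p: "(\<Prod>i\<in>UNIV. fact ((m + ej j) $ i) :: real) = real (m $ j + 1) * (\<Prod>i\<in>UNIV. fact (m $ i))" .
  have f: "(fact (abs_mi m + 1) :: real) = real (abs_mi m + 1) * fact (abs_mi m)"
    by simp
  have aux: "(a * P) / (k * F) * k = P / F * a" if "k > 0" for a P k F :: real
    using that by (simp add: field_simps)
  show ?thesis
    unfolding arv_weight_def abs_mi_shift p f by (rule aux) simp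
qed

context
  fixes J :: "'y::real_inner \<Rightarrow> 'y"
  assumes cs: "complex_structure J"
begin

lemma series_zero_unique:
  assumes "\<forall>z\<in>unit_ball_d. ((\<lambda>n. scaleJ J (mono_pow z n) (c n)) has_sum 0) UNIV"
  shows "c n = 0"
proof -
  have c0: "cinner_y J 0 v = 0" for v by (simp add: cinner_y_def complex_eq_iff)
  have "cinner_y J (c n) v = 0" for v
  proof (rule scalar_unique[where \<alpha>="\<lambda>n. cinner_y J (c n) v"], intro ballI)
    fix z :: "complex^'a" assume "z \<in> unit_ball_d"
    then have "((\<lambda>n. cinner_y J (scaleJ J (mono_pow z n) (c n)) v) has_sum cinner_y J 0 v) UNIV"
      using assms by (intro has_sum_bounded_linear[OF bl_cinner[OF cs]]) auto
    then show "((\<lambda>n. mono_pow z n * cinner_y J (c n) v) has_sum 0) UNIV"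
      by (simp add: cinner_scaleJ[OF cs] c0)
  qed
  from arg_cong[OF this[of "c n"], of Re] show ?thesis by (simp add: Re_cinner[OF cs])
qed

lemma arv_series_unique:
  assumes "arv_series J c f" "arv_series J c' f"
  shows "c = c'"
proof
  fix n
  have "\<forall>z\<in>unit_ball_d. ((\<lambda>n. scaleJ J (mono_pow z n) (c n - c' n)) has_sum 0) UNIV"
  proof
    fix z :: "complex^'a" assume z: "z \<in> unit_ball_d"
    have "((\<lambda>n. scaleJ J (mono_pow z n) (c n) + - scaleJ J (mono_pow z n) (c' n)) has_sum (f z + - f z)) UNIV"
      using assms z unfolding arv_series_def by (intro has_sum_add) (auto simp: has_sum_uminus)
    then show "((\<lambda>n. scaleJ J (mono_pow z n) (c n - c' n)) has_sum 0) UNIV"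
      by (simp add: scaleJ_diff_right[OF cs])
  qed
  from series_zero_unique[OF this] show "c n = c' n" by simp
qed

lemma arv_coef_eq: "arv_series J c f \<Longrightarrow> arv_coef J f = c"
  unfolding arv_coef_def by (rule the_equality) (auto dest: arv_series_unique)

lemma shift_series:
  assumes "((\<lambda>n. scaleJ J (mono_pow z n) (c n)) has_sum s) UNIV"
  shows "((\<lambda>n. scaleJ J (mono_pow z n) (shiftc j c n)) has_sum scaleJ J (z $ j) s) UNIV"
proof -
  define G where "G n = scaleJ J (mono_pow z n) (shiftc j c n)" for n
  have "((\<lambda>m. scaleJ J (z $ j) (scaleJ J (mono_pow z m) (c m))) has_sum scaleJ J (z $ j) s) UNIV"
    using assms by (intro has_sum_bounded_linear[OF bl_scaleJ[OF cs]])
  then have "((G \<circ> (\<lambda>m. m + ej j)) has_sum scaleJ J (z $ j) s) UNIV"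
    by (simp add: G_def o_def shiftc_def mono_pow_shift scaleJ_mult[OF cs])
  then have "(G has_sum scaleJ J (z $ j) s) (range (\<lambda>m. m + ej j))"
    by (subst has_sum_reindex[OF inj_add_ej])
  then have "(G has_sum scaleJ J (z $ j) s) {n. 0 < n $ j}"
    by (simp add: image_add_ej)
  moreover have "(G has_sum scaleJ J (z $ j) s) {n. 0 < n $ j} \<longleftrightarrow> (G has_sum scaleJ J (z $ j) s) UNIV"
    by (rule has_sum_cong_neutral) (auto simp: G_def shiftc_def scaleJ_0_right[OF cs])
  ultimately have "(G has_sum scaleJ J (z $ j) s) UNIV" by simp
  then show ?thesis unfolding G_def by (simp add: o_def)
qed

end



lemma has_sum_finsum:
  fixes g :: "'i \<Rightarrow> 'a \<Rightarrow> 'b::{topological_comm_monoid_add}"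
  assumes "finite I" "\<And>i. i \<in> I \<Longrightarrow> (g i has_sum s i) A"
  shows "((\<lambda>x. \<Sum>i\<in>I. g i x) has_sum (\<Sum>i\<in>I. s i)) A"
  using assms
proof (induction I rule: finite_induct)
  case empty then show ?case by simp
next
  case (insert i I)
  then show ?case by (simp add: has_sum_add)
qed

lemma deficit:
  fixes \<beta> :: "'i \<Rightarrow> 'y::real_inner"
  assumes "finite I" "\<And>j. j \<in> I \<Longrightarrow> q j > 0" "(\<Sum>j\<in>I. q j) = 1" "a = (\<Sum>j\<in>I. \<beta> j)"
  shows "(\<Sum>j\<in>I. (norm (\<beta> j))\<^sup>2 / q j) - (norm a)\<^sup>2 = (\<Sum>j\<in>I. q j * (norm (\<beta> j /\<^sub>R q j - a))\<^sup>2)"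
proof -
  have t: "q j * (norm (\<beta> j /\<^sub>R q j - a))\<^sup>2 = (norm (\<beta> j))\<^sup>2 / q j - 2 * inner (\<beta> j) a + q j * (norm a)\<^sup>2"
    if "j \<in> I" for j
  proof -
    have qj: "q j > 0" using assms(2) that by auto
    have "(norm (\<beta> j /\<^sub>R q j - a))\<^sup>2 = inner (\<beta> j /\<^sub>R q j - a) (\<beta> j /\<^sub>R q j - a)"
      by (simp add: power2_norm_eq_inner)
    also have "\<dots> = inner (\<beta> j) (\<beta> j) / (q j)\<^sup>2 - 2 * inner (\<beta> j) a / q j + inner a a"
      by (simp add: inner_diff_left inner_diff_right inner_commute power2_eq_square field_simps)
    finally have "(norm (\<beta> j /\<^sub>R q j - a))\<^sup>2 = (norm (\<beta> j))\<^sup>2 / (q j)\<^sup>2 - 2 * inner (\<beta> j) a / q j + (norm a)\<^sup>2"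
      by (simp add: power2_norm_eq_inner)
    then show ?thesis using qj by (simp add: field_simps power2_eq_square)
  qed
  have "(\<Sum>j\<in>I. q j * (norm (\<beta> j /\<^sub>R q j - a))\<^sup>2)
      = (\<Sum>j\<in>I. (norm (\<beta> j))\<^sup>2 / q j) - 2 * (\<Sum>j\<in>I. inner (\<beta> j) a) + (\<Sum>j\<in>I. q j) * (norm a)\<^sup>2"
    by (simp add: t sum.distrib sum_subtractf sum_distrib_left sum_distrib_right)
  also have "(\<Sum>j\<in>I. inner (\<beta> j) a) = (norm a)\<^sup>2"
    using assms(4) by (simp add: inner_sum_left power2_norm_eq_inner)
  finally show ?thesis using assms(3) by simp
qed

context
  fixes J :: "'y::real_inner \<Rightarrow> 'y"
  assumes cs: "complex_structure J"
begin

lemma arveson_coef: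
  assumes "h \<in> arveson_space J"
  shows "arv_series J (arv_coef J h) h"
    and "(\<lambda>n. arv_weight n * (norm (arv_coef J h n))\<^sup>2) summable_on UNIV"
proof -
  obtain c where c: "arv_series J c h" "(\<lambda>n. arv_weight n * (norm (c n))\<^sup>2) summable_on UNIV"
    using assms by (auto simp: arveson_space_def)
  then have "arv_coef J h = c" using arv_coef_eq[OF cs] by blast
  then show "arv_series J (arv_coef J h) h"
    and "(\<lambda>n. arv_weight n * (norm (arv_coef J h n))\<^sup>2) summable_on UNIV" using c by auto
qed

lemma arveson_out: "h \<in> arveson_space J \<Longrightarrow> z \<notin> unit_ball_d \<Longrightarrow> h z = 0"
  by (auto simp: arveson_space_def)

lemma arveson_eqI:
  assumes "h1 \<in> arveson_space J" "h2 \<in> arveson_space J" "arv_coef J h1 = arv_coef J h2"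
  shows "h1 = h2"
proof
  fix z
  show "h1 z = h2 z"
  proof (cases "z \<in> unit_ball_d")
    case True
    have "((\<lambda>n. scaleJ J (mono_pow z n) (arv_coef J h1 n)) has_sum h1 z) UNIV"
      using arveson_coef(1)[OF assms(1)] True by (auto simp: arv_series_def)
    moreover have "((\<lambda>n. scaleJ J (mono_pow z n) (arv_coef J h1 n)) has_sum h2 z) UNIV"
      using arveson_coef(1)[OF assms(2)] True assms(3) by (auto simp: arv_series_def)
    ultimately show ?thesis using has_sum_unique by blast
  next
    case False
    then show ?thesis by (simp add: arveson_out[OF assms(1) False] arveson_out[OF assms(2) False])
  qed
qed

definition monomial_fn :: "nat^'d::finite \<Rightarrow> 'y \<Rightarrow> complex^'d \<Rightarrow> 'y" where
  "monomial_fn n v = (\<lambda>z. if z \<in> unit_ball_d then scaleJ J (mono_pow z n) v else 0)"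

lemma monomial_series: "arv_series J (\<lambda>m. if m = n then v else 0) (monomial_fn n v)"
  unfolding arv_series_def monomial_fn_def
  by (auto intro!: has_sum_finite_neutralI[where B="{n}"] simp: scaleJ_0_right[OF cs] split: if_splits)

lemma monomial_in: "monomial_fn n v \<in> arveson_space J"
proof -
  have "(\<lambda>m. arv_weight m * (norm (if m = n then v else 0))\<^sup>2) summable_on UNIV"
    by (rule has_sum_imp_summable, rule has_sum_finite_neutralI[where B="{n}"]) auto
  then show ?thesis using monomial_series unfolding arveson_space_def
    by (auto simp: monomial_fn_def)
qed

lemma adjoint_unique:
  fixes h1 h2 :: "complex^'d::finite \<Rightarrow> 'y"
  assumes "h1 \<in> arveson_space J" "h2 \<in> arveson_space J"
    and "\<And>g. g \<in> arveson_space J \<Longrightarrow> arv_inner J g h1 = arv_inner J g h2"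
  shows "h1 = h2"
proof (rule arveson_eqI[OF assms(1,2)], rule ext)
  fix n :: "nat^'d"
  have inner_mono: "arv_inner J (monomial_fn n v) h = of_real (arv_weight n) * cinner_y J v (arv_coef J h n)"
    for h v
  proof -
    have "arv_coef J (monomial_fn n v) = (\<lambda>m. if m = n then v else 0)"
      by (rule arv_coef_eq[OF cs monomial_series])
    then show ?thesis unfolding arv_inner_def
      by (intro infsumI has_sum_finite_neutralI[where B="{n}"]) (auto simp: cinner_y_def complex_eq_iff)
  qed
  define v where "v = arv_coef J h1 n - arv_coef J h2 n"
  have "arv_inner J (monomial_fn n v) h1 = arv_inner J (monomial_fn n v) h2"
    using assms(3) monomial_in by blast
  then have "of_real (arv_weight n) * cinner_y J v (arv_coef J h1 n) = of_real (arv_weight n) * cinner_y J v (arv_coef J h2 n)"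
    by (simp add: inner_mono)
  then have "cinner_y J v (arv_coef J h1 n) = cinner_y J v (arv_coef J h2 n)"
    using arv_weight_pos[of n] by simp
  then have "inner v (arv_coef J h1 n) = inner v (arv_coef J h2 n)"
    by (metis Re_cinner[OF cs])
  then have "inner v v = 0" by (simp add: v_def inner_diff_right)
  then show "arv_coef J h1 n = arv_coef J h2 n" by (simp add: v_def)
qed

lemma mult_coord_series:
  assumes "arv_series J c g"
  shows "arv_series J (shiftc j c) (mult_coord J j g)"
  using assms shift_series[OF cs] unfolding arv_series_def mult_coord_def by blast

lemma adjoint_property:
  assumes g: "arv_series J c g" and f: "arv_series J a f" and h: "arv_series J b h"
    and b: "\<And>m. b m = (real (m $ j + 1) / real (abs_mi m + 1)) *\<^sub>R a (m + ej j)"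
  shows "arv_inner J (mult_coord J j g) f = arv_inner J g h"
proof -
  have cg: "arv_coef J (mult_coord J j g) = shiftc j c"
    by (rule arv_coef_eq[OF cs mult_coord_series[OF g]])
  define F where "F n = of_real (arv_weight n) * cinner_y J (shiftc j c n) (a n)" for n
  have "arv_inner J (mult_coord J j g) f = infsum F UNIV"
    unfolding arv_inner_def cg arv_coef_eq[OF cs f] F_def ..
  also have "\<dots> = infsum F {n. 0 < n $ j}"
    by (rule infsum_cong_neutral) (auto simp: F_def shiftc_def cinner_y_def complex_eq_iff)
  also have "\<dots> = infsum F (range (\<lambda>m. m + ej j))"
    by (simp add: image_add_ej)
  also have "\<dots> = infsum (F \<circ> (\<lambda>m. m + ej j)) UNIV"
    by (rule infsum_reindex[OF inj_add_ej])
  also have "\<dots> = (\<Sum>\<^sub>\<infinity>m. of_real (arv_weight m) * cinner_y J (c m) (b m))"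
  proof (rule infsum_cong)
    fix m
    have "(F \<circ> (\<lambda>m. m + ej j)) m = of_real (arv_weight (m + ej j)) * cinner_y J (c m) (a (m + ej j))"
      by (simp add: F_def shiftc_def)
    also have "arv_weight (m + ej j) = arv_weight m * (real (m $ j + 1) / real (abs_mi m + 1))"
      using arv_weight_shift[of m j] by (simp add: field_simps)
    finally show "(F \<circ> (\<lambda>m. m + ej j)) m = of_real (arv_weight m) * cinner_y J (c m) (b m)"
      by (simp add: b cinner_scaleR_right[OF cs])
  qed
  also have "\<dots> = arv_inner J g h"
    unfolding arv_inner_def arv_coef_eq[OF cs g] arv_coef_eq[OF cs h] ..
  finally show ?thesis .
qed

end



lemma shiftc_0[simp]: "shiftc i c 0 = 0"
  by (simp add: shiftc_def)

lemma abs_mi_pos: "n \<noteq> (0::nat^'d::finite) \<Longrightarrow> 0 < abs_mi n"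
  unfolding abs_mi_def by (metis (mono_tags) le_abs_mi abs_mi_def bot_nat_0.extremum_uniqueI
     gr0I vec_eq_iff zero_index)

lemma weight_minus:
  fixes n :: "nat^'d::finite"
  assumes "0 < n $ i"
  shows "arv_weight (n - ej i) = arv_weight n * real (abs_mi n) / real (n $ i)"
proof -
  define m where "m = n - ej i"
  have n: "n = m + ej i" using assms by (simp add: m_def minus_ej_add)
  have "arv_weight (m + ej i) * real (abs_mi m + 1) = arv_weight m * real (m $ i + 1)"
    by (rule arv_weight_shift)
  moreover have "abs_mi n = abs_mi m + 1" using n abs_mi_shift by simp
  moreover have "n $ i = m $ i + 1" using n by simp
  ultimately have "arv_weight n * real (abs_mi n) = arv_weight m * real (n $ i)" using n by simp
  then show ?thesis using assms by (simp add: m_def field_simps)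
qed

lemma key_ineq:
  fixes a :: "nat^'d::finite \<Rightarrow> 'y::real_inner" and b :: "'d \<Rightarrow> nat^'d \<Rightarrow> 'y"
  assumes rel: "\<And>n. a n = (if n = 0 then a0 else 0) + (\<Sum>i\<in>UNIV. shiftc i (b i) n)"
    and wa: "(\<lambda>n. arv_weight n * (norm (a n))\<^sup>2) summable_on UNIV"
    and wb: "\<And>i. (\<lambda>n. arv_weight n * (norm (b i n))\<^sup>2) summable_on UNIV"
    and ineq: "(\<Sum>i\<in>UNIV. infsum (\<lambda>n. arv_weight n * (norm (b i n))\<^sup>2) UNIV)
                 \<le> infsum (\<lambda>n. arv_weight n * (norm (a n))\<^sup>2) UNIV - (norm a0)\<^sup>2"
  shows "b i m = (real (m $ i + 1) / real (abs_mi m + 1)) *\<^sub>R a (m + ej i)"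
proof -
  define w where "w = (arv_weight :: nat^'d \<Rightarrow> real)"
  define Bi where "Bi i = infsum (\<lambda>n. w n * (norm (b i n))\<^sup>2) UNIV" for i
  define A where "A = infsum (\<lambda>n. w n * (norm (a n))\<^sup>2) UNIV"
  define Gi where "Gi i n = (if 0 < n $ i then w (n - ej i) * (norm (b i (n - ej i)))\<^sup>2 else 0)" for i n
  have hGi: "(Gi i has_sum Bi i) UNIV" for i
  proof -
    have "((\<lambda>n. w n * (norm (b i n))\<^sup>2) has_sum Bi i) UNIV"
      using wb[of i] by (simp add: Bi_def w_def summable_iff_has_sum_infsum[symmetric])
    then have "((Gi i \<circ> (\<lambda>m. m + ej i)) has_sum Bi i) UNIV"
      by (simp add: Gi_def o_def)
    then have "(Gi i has_sum Bi i) (range (\<lambda>m. m + ej i))"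
      by (subst has_sum_reindex[OF inj_add_ej])
    then have "(Gi i has_sum Bi i) {n. 0 < n $ i}" by (simp add: image_add_ej)
    moreover have "(Gi i has_sum Bi i) {n. 0 < n $ i} \<longleftrightarrow> (Gi i has_sum Bi i) UNIV"
      by (rule has_sum_cong_neutral) (auto simp: Gi_def)
    ultimately show ?thesis by simp
  qed
  define G where "G n = (\<Sum>i\<in>UNIV. Gi i n)" for n
  have hG: "(G has_sum (\<Sum>i\<in>UNIV. Bi i)) UNIV"
    unfolding G_def by (rule has_sum_finsum) (auto intro: hGi)
  have a0: "a 0 = a0" using rel[of 0] by simp
  define F where "F n = (if n = 0 then 0 else w n * (norm (a n))\<^sup>2)" for n
  have hF: "(F has_sum (A - (norm a0)\<^sup>2)) UNIV"
  proof -
    have "((\<lambda>n. w n * (norm (a n))\<^sup>2) has_sum A) UNIV"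
      using wa by (simp add: A_def w_def summable_iff_has_sum_infsum[symmetric])
    moreover have "((\<lambda>n. - (if n = 0 then w n * (norm (a n))\<^sup>2 else 0)) has_sum - (norm a0)\<^sup>2) UNIV"
      by (rule has_sum_finite_neutralI[where B="{0}"]) (auto simp: a0 w_def)
    ultimately have "((\<lambda>n. w n * (norm (a n))\<^sup>2 + - (if n = 0 then w n * (norm (a n))\<^sup>2 else 0)) has_sum (A + - (norm a0)\<^sup>2)) UNIV"
      by (rule has_sum_add)
    then show ?thesis unfolding F_def by (simp add: if_distrib cong: if_cong)
  qed
  define D where "D n = G n - F n" for n
  have hD: "(D has_sum ((\<Sum>i\<in>UNIV. Bi i) - (A - (norm a0)\<^sup>2))) UNIV"
  proof -
    have "((\<lambda>n. G n + - F n) has_sum ((\<Sum>i\<in>UNIV. Bi i) + - (A - (norm a0)\<^sup>2))) UNIV"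
      using hG hF by (intro has_sum_add) (auto simp: has_sum_uminus)
    then show ?thesis unfolding D_def by (simp add: algebra_simps)
  qed
  have struct: "D n = w n * (\<Sum>j\<in>{j. 0 < n $ j}. (real (n $ j) / real (abs_mi n)) *
       (norm (b j (n - ej j) /\<^sub>R (real (n $ j) / real (abs_mi n)) - a n))\<^sup>2)"
    if n0: "n \<noteq> 0" for n
  proof -
    define I where "I = {j. 0 < n $ j}"
    define q where "q j = real (n $ j) / real (abs_mi n)" for j
    define \<beta> where "\<beta> j = b j (n - ej j)" for j
    have absn: "0 < abs_mi n" using n0 by (rule abs_mi_pos)
    have qpos: "q j > 0" if "j \<in> I" for j using that absn by (simp add: q_def I_def)
    have qsum: "(\<Sum>j\<in>I. q j) = 1"
    proof -
      have "(\<Sum>j\<in>I. q j) = (\<Sum>j\<in>UNIV. q j)"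
        by (rule sum.mono_neutral_left) (auto simp: I_def q_def)
      also have "\<dots> = real (abs_mi n) / real (abs_mi n)"
        by (simp add: q_def abs_mi_def sum_divide_distrib[symmetric])
      finally show ?thesis using absn by simp
    qed
    have asum: "a n = (\<Sum>j\<in>I. \<beta> j)"
    proof -
      have "a n = (\<Sum>i\<in>UNIV. shiftc i (b i) n)" using rel[of n] n0 by simp
      also have "\<dots> = (\<Sum>j\<in>I. \<beta> j)"
        by (rule sum.mono_neutral_cong_right) (auto simp: I_def \<beta>_def shiftc_def)
      finally show ?thesis .
    qed
    have Gn: "G n = w n * (\<Sum>j\<in>I. (norm (\<beta> j))\<^sup>2 / q j)"
    proof -
      have "G n = (\<Sum>j\<in>I. w (n - ej j) * (norm (\<beta> j))\<^sup>2)"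
        unfolding G_def by (rule sum.mono_neutral_cong_right) (auto simp: I_def \<beta>_def Gi_def)
      also have "\<dots> = (\<Sum>j\<in>I. w n * ((norm (\<beta> j))\<^sup>2 / q j))"
        by (intro sum.cong refl) (simp add: I_def w_def weight_minus q_def)
      finally show ?thesis by (simp add: sum_distrib_left)
    qed
    have "D n = w n * ((\<Sum>j\<in>I. (norm (\<beta> j))\<^sup>2 / q j) - (norm (a n))\<^sup>2)"
      using n0 by (simp add: D_def Gn F_def algebra_simps)
    also have "\<dots> = w n * (\<Sum>j\<in>I. q j * (norm (\<beta> j /\<^sub>R q j - a n))\<^sup>2)"
      using deficit[of I q "a n" \<beta>] qpos qsum asum by simp
    finally show ?thesis by (simp add: I_def q_def \<beta>_def)
  qed
  have Dnn: "D n \<ge> 0" for n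
  proof (cases "n = 0")
    case True then show ?thesis by (simp add: D_def G_def Gi_def F_def)
  next
    case False
    then show ?thesis unfolding struct[OF False] w_def
      by (intro mult_nonneg_nonneg sum_nonneg arv_weight_pos[THEN less_imp_le]) auto
  qed
  have "infsum D UNIV \<le> 0" using hD ineq by (simp add: infsumI A_def Bi_def w_def)
  then have D0: "D n = 0" for n
    using hD Dnn by (intro nonneg_infsum_le_0D[of D UNIV]) (auto dest: has_sum_imp_summable)
  define n where "n = m + ej i"
  have n0: "n \<noteq> 0"
  proof
    assume "n = 0"
    then have "n $ i = 0" by simp
    then show False by (simp add: n_def)
  qed
  have ni: "0 < n $ i" by (simp add: n_def)
  have absn: "abs_mi n = abs_mi m + 1" by (simp add: n_def abs_mi_shift)
  have nii: "n $ i = m $ i + 1" by (simp add: n_def)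
  define q where "q j = real (n $ j) / real (abs_mi n)" for j
  have "(\<Sum>j\<in>{j. 0 < n $ j}. q j * (norm (b j (n - ej j) /\<^sub>R q j - a n))\<^sup>2) = 0"
    using D0[of n] struct[OF n0] arv_weight_pos[of n] by (simp add: w_def q_def)
  then have "\<forall>j\<in>{j. 0 < n $ j}. q j * (norm (b j (n - ej j) /\<^sub>R q j - a n))\<^sup>2 = 0"
    by (subst sum_nonneg_eq_0_iff[symmetric]) (auto intro!: mult_nonneg_nonneg simp: q_def)
  then have "q i * (norm (b i (n - ej i) /\<^sub>R q i - a n))\<^sup>2 = 0" using ni by auto
  moreover have qi: "q i > 0" using ni abs_mi_pos[OF n0] by (simp add: q_def)
  ultimately have "b i (n - ej i) /\<^sub>R q i = a n" by simp
  then have "q i *\<^sub>R (b i (n - ej i) /\<^sub>R q i) = q i *\<^sub>R a n" by simp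
  then have "b i (n - ej i) = q i *\<^sub>R a n" using qi by simp
  then show ?thesis by (simp add: n_def q_def abs_mi_shift)
qed



lemma mono_pow_0[simp]: "mono_pow z 0 = 1"
  by (simp add: mono_pow_def)

lemma coef_relation:
  fixes J :: "'y::real_inner \<Rightarrow> 'y"
  assumes cs: "complex_structure J"
    and sa: "arv_series J a f" and sb: "\<And>i. arv_series J (b i) (g i)"
    and hyp: "\<And>z. z \<in> unit_ball_d \<Longrightarrow> f z - f 0 = (\<Sum>i\<in>UNIV. scaleJ J (z $ i) (g i z))"
  shows "a n = (if n = 0 then f 0 else 0) + (\<Sum>i\<in>UNIV. shiftc i (b i) n)"
proof -
  define c where "c n = (if n = 0 then f 0 else 0) + (\<Sum>i\<in>UNIV. shiftc i (b i) n)" for n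
  have "arv_series J c f"
    unfolding arv_series_def
  proof
    fix z :: "complex^'a" assume z: "z \<in> unit_ball_d"
    have h1: "((\<lambda>n. scaleJ J (mono_pow z n) (if n = 0 then f 0 else 0)) has_sum f 0) UNIV"
      by (rule has_sum_finite_neutralI[where B="{0}"]) (auto simp: scaleJ_0_right[OF cs] scaleJ_1[OF cs])
    have h2: "((\<lambda>n. \<Sum>i\<in>UNIV. scaleJ J (mono_pow z n) (shiftc i (b i) n)) has_sum
               (\<Sum>i\<in>UNIV. scaleJ J (z $ i) (g i z))) UNIV"
      using sb z by (intro has_sum_finsum shift_series[OF cs]) (auto simp: arv_series_def)
    have "((\<lambda>n. scaleJ J (mono_pow z n) (if n = 0 then f 0 else 0) + (\<Sum>i\<in>UNIV. scaleJ J (mono_pow z n) (shiftc i (b i) n)))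
           has_sum (f 0 + (\<Sum>i\<in>UNIV. scaleJ J (z $ i) (g i z)))) UNIV"
      by (rule has_sum_add[OF h1 h2])
    then show "((\<lambda>n. scaleJ J (mono_pow z n) (c n)) has_sum f z) UNIV"
      using hyp[OF z] by (simp add: c_def scaleJ_add_right[OF cs] scaleJ_sum_right[OF cs] algebra_simps)
  qed
  with sa have "a = c" by (rule arv_series_unique[OF cs])
  then show ?thesis by (simp add: c_def)
qed

theorem theorem3p22:
  fixes J :: "'y::{real_inner,complete_space} \<Rightarrow> 'y"
    and M :: "(complex^'d::finite \<Rightarrow> 'y) set"
    and T :: "'d \<Rightarrow> (complex^'d \<Rightarrow> 'y) \<Rightarrow> (complex^'d \<Rightarrow> 'y)"
  assumes "complex_structure J"
    and "isometric_hilbert_subspace J M"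
    and "\<And>j. bounded_op_on J M (T j)"
    and "\<And>f z. f \<in> M \<Longrightarrow> z \<in> unit_ball_d \<Longrightarrow>
           f z - f 0 = (\<Sum>j\<in>UNIV. scaleJ J (z $ j) (T j f z))"
    and "\<And>f. f \<in> M \<Longrightarrow>
           (\<Sum>j\<in>UNIV. (arv_norm J (T j f))\<^sup>2) \<le> (arv_norm J f)\<^sup>2 - (norm (f 0))\<^sup>2"
  shows "\<forall>j. \<forall>f\<in>M. mult_coord_adj J j f \<in> M \<and> T j f = mult_coord_adj J j f"
proof (intro allI ballI)
  fix j f assume fM: "f \<in> M"
  note cs = assms(1)
  have Msub: "M \<subseteq> arveson_space J" using assms(2) by (simp add: isometric_hilbert_subspace_def)
  have TM: "T i f \<in> M" for i using assms(3)[of i] fM by (simp add: bounded_op_on_def)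
  have fA: "f \<in> arveson_space J" using fM Msub by blast
  have TA: "T i f \<in> arveson_space J" for i using TM Msub by blast
  define a where "a = arv_coef J f"
  define b where "b i = arv_coef J (T i f)" for i
  have sa: "arv_series J a f" and wa: "(\<lambda>n. arv_weight n * (norm (a n))\<^sup>2) summable_on UNIV"
    using arveson_coef[OF cs fA] by (auto simp: a_def)
  have sb: "arv_series J (b i) (T i f)" and wb: "(\<lambda>n. arv_weight n * (norm (b i n))\<^sup>2) summable_on UNIV" for i
    using arveson_coef[OF cs TA[of i]] by (auto simp: b_def)
  have rel: "a n = (if n = 0 then f 0 else 0) + (\<Sum>i\<in>UNIV. shiftc i (b i) n)" for n
    by (rule coef_relation[OF cs sa sb assms(4)[OF fM]])
  have nsq: "(arv_norm J h)\<^sup>2 = infsum (\<lambda>n. arv_weight n * (norm (arv_coef J h n))\<^sup>2) UNIV" for h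
  proof -
    have "infsum (\<lambda>n. arv_weight n * (norm (arv_coef J h n))\<^sup>2) UNIV \<ge> 0"
      by (intro infsum_nonneg mult_nonneg_nonneg arv_weight_pos[THEN less_imp_le]) auto
    then show ?thesis by (simp add: arv_norm_def)
  qed
  have ineq: "(\<Sum>i\<in>UNIV. infsum (\<lambda>n. arv_weight n * (norm (b i n))\<^sup>2) UNIV)
                 \<le> infsum (\<lambda>n. arv_weight n * (norm (a n))\<^sup>2) UNIV - (norm (f 0))\<^sup>2"
    using assms(5)[OF fM] by (simp add: nsq a_def b_def)
  have key: "b i m = (real (m $ i + 1) / real (abs_mi m + 1)) *\<^sub>R a (m + ej i)" for i m
    by (rule key_ineq[OF rel wa wb ineq])
  have adj: "arv_inner J (mult_coord J j g) f = arv_inner J g (T j f)" if g: "g \<in> arveson_space J" for g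
    by (rule adjoint_property[OF cs arveson_coef(1)[OF cs g] sa sb key])
  have eq: "mult_coord_adj J j f = T j f"
    unfolding mult_coord_adj_def
  proof (rule the_equality)
    show "T j f \<in> arveson_space J \<and> (\<forall>g\<in>arveson_space J. arv_inner J (mult_coord J j g) f = arv_inner J g (T j f))"
      using TA adj by blast
  next
    fix h assume h: "h \<in> arveson_space J \<and> (\<forall>g\<in>arveson_space J. arv_inner J (mult_coord J j g) f = arv_inner J g h)"
    show "h = T j f"
      by (rule adjoint_unique[OF cs]) (use h TA adj in auto)
  qed
  show "mult_coord_adj J j f \<in> M \<and> T j f = mult_coord_adj J j f"
    using eq TM by simp
qed

end
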